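(* Let $\hat{a}\in\mathbb{C}$, $\hat{a}\neq 0$, and $\hat{d}\in\mathbb{Z}$, $\hat{d}\geq 0$. Let $F_0,F_1$ be causal filters with $\gcd(F_0,F_1)=z^{-d_F}$ where $0\leq d_F\leq \hat{d}$, and let $M\in\mathbb{Z}$ satisfy $0\leq M\leq \hat{d}-d_F$. (i) If $F_0\neq 0$, there exists a unique causal complement $(R_0,R_1)$ to $(F_0,F_1)$ for inhomogeneity $\hat{a}z^{-\hat{d}}$ that is degree-reducing modulo $M$ in $F_0$, i.e. with $z^{-M}\mid R_0$, $z^{-M}\mid R_1$ and $\deg(R_0)<\deg(F_0)-\deg\gcd(F_0,F_1)+M$. (ii) If $F_1\neq 0$, there exists a unique causal complement $(R'_0,R'_1)$ to $(F_0,F_1)$ for inhomogeneity $\hat{a}z^{-\hat{d}}$ that is degree-reducing modulo $M$ in $F_1$, i.e. with $z^{-M}\mid R'_0$, $z^{-M}\mid R'_1$ and $\deg(R'_1)<\deg(F_1)-\deg\gcd(F_0,F_1)+M$. (iii) If $F_0,F_1\neq 0$ and $(R_0,R_1)$, $(R'_0,R'_1)$ are the complements of (i) and (ii), then $(R_0,R_1)=(R'_0,R'_1)$ if and only if $\hat{d}<\deg(F_0)+\deg(F_1)-\deg\gcd(F_0,F_1)+M$.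
   Context: A causal filter is a polynomial in $z^{-1}$ with complex coefficients; $\deg$ denotes degree as a polynomial in $z^{-1}$ (with $\deg 0=-\infty$). Divisibility and gcd are taken in $\mathbb{C}[z^{-1}]$ (gcd determined up to nonzero constant; "$\gcd(F_0,F_1)=z^{-d_F}$" means the gcd is $z^{-d_F}$ up to a nonzero constant). Given causal $F_0,F_1$, an ordered pair $(R_0,R_1)$ of causal filters is a causal complement to $(F_0,F_1)$ for inhomogeneity $\hat{a}z^{-\hat{d}}$ if $F_0(z)R_1(z)-F_1(z)R_0(z)=\hat{a}z^{-\hat{d}}$. The pair $(R_0,R_1)$ has multiplicity $M$ if $z^{-M}$ divides both $R_0$ and $R_1$. For $\ell\in\{0,1\}$, a causal complement $(R_0,R_1)$ is degree-reducing modulo $M$ in $F_\ell$ if it has multiplicity $M$ and $\deg(R_\ell)<\deg(F_\ell)-\deg\gcd(F_0,F_1)+M$. *)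

theory Defs
  imports "HOL-Computational_Algebra.Polynomial_Factorial" "HOL-Computational_Algebra.Field_as_Ring" "HOL-Library.Extended_Real"
begin

text \<open>A causal filter is a polynomial in the indeterminate w = z^(-1) with complex
coefficients, represented as complex poly; z^(-k) is the monomial monom 1 k.\<close>

definition fdeg :: "complex poly \<Rightarrow> ereal" where
  "fdeg p = (if p = 0 then -\<infinity> else ereal (real (degree p)))"

definition causal_complement ::
  "complex poly \<Rightarrow> complex poly \<Rightarrow> complex \<Rightarrow> nat \<Rightarrow> complex poly \<Rightarrow> complex poly \<Rightarrow> bool" where
  "causal_complement F0 F1 a d R0 R1 \<longleftrightarrow> F0 * R1 - F1 * R0 = monom a d"

definition has_multiplicity :: "nat \<Rightarrow> complex poly \<Rightarrow> complex poly \<Rightarrow> bool" where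
  "has_multiplicity M R0 R1 \<longleftrightarrow> monom 1 M dvd R0 \<and> monom 1 M dvd R1"

text \<open>Degree-reducing modulo M in F_l (l = 0 or l = 1; any l \<noteq> 0 means F_1).\<close>
definition degree_reducing ::
  "complex poly \<Rightarrow> complex poly \<Rightarrow> complex \<Rightarrow> nat \<Rightarrow> nat \<Rightarrow> nat \<Rightarrow> complex poly \<Rightarrow> complex poly \<Rightarrow> bool" where
  "degree_reducing F0 F1 a d M l R0 R1 \<longleftrightarrow>
     causal_complement F0 F1 a d R0 R1 \<and> has_multiplicity M R0 R1 \<and>
     (if l = 0 then fdeg R0 < fdeg F0 - fdeg (gcd F0 F1) + ereal (real M)
      else fdeg R1 < fdeg F1 - fdeg (gcd F0 F1) + ereal (real M))"

end

theory Submission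
  imports Defs
begin

lemma core:
  fixes A B c :: "complex poly"
  assumes cop: "coprime A B" and A: "A \<noteq> 0"
  shows "\<exists>!(X,Y). A*Y - B*X = c \<and> (X = 0 \<or> degree X < degree A)"
proof -
  obtain u v where uv: "u*A + v*B = gcd A B"
    using bezout_coefficients_fst_snd by blast
  with cop have uv1: "u*A + v*B = 1" by simp
  define X0 where "X0 = - (c*v)"
  define Y0 where "Y0 = c*u"
  have e0: "A*Y0 - B*X0 = c"
  proof -
    have "A*Y0 - B*X0 = c*(u*A+v*B)" unfolding X0_def Y0_def by (simp add: algebra_simps)
    thus ?thesis using uv1 by simp
  qed
  define X where "X = X0 mod A"
  define Y where "Y = Y0 - (X0 div A)*B"
  have XX0: "X = X0 - (X0 div A)*A" unfolding X_def by (simp add: minus_div_mult_eq_mod)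
  have "A*Y - B*X = A*Y0 - B*X0" unfolding Y_def XX0 by (simp add: algebra_simps)
  hence e1: "A*Y - B*X = c" using e0 by simp
  have d1: "X = 0 \<or> degree X < degree A" unfolding X_def using A degree_mod_less by blast
  show ?thesis
  proof (rule ex1I[of _ "(X,Y)"])
    show "case (X, Y) of (X, Y) \<Rightarrow> A * Y - B * X = c \<and> (X = 0 \<or> degree X < degree A)"
      using e1 d1 by simp
  next
    fix p assume "case p of (X', Y') \<Rightarrow> A * Y' - B * X' = c \<and> (X' = 0 \<or> degree X' < degree A)"
    then obtain X' Y' where p: "p = (X',Y')" and e2: "A*Y' - B*X' = c"
      and d2: "X' = 0 \<or> degree X' < degree A" by auto
    have eq: "A*(Y-Y') = B*(X-X')" using e1 e2 by (simp add: algebra_simps)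
    hence "A dvd B*(X-X')" by (metis dvd_triv_left)
    hence dv: "A dvd X-X'" using cop coprime_dvd_mult_right_iff by blast
    have XX: "X = X'"
    proof (rule ccontr)
      assume ne: "X \<noteq> X'"
      hence "degree A \<le> degree (X-X')" using dv by (simp add: dvd_imp_degree_le)
      moreover have "degree (X-X') \<le> max (degree X) (degree X')" by (rule degree_diff_le_max)
      moreover have "max (degree X) (degree X') < degree A"
        using d1 d2 ne by auto
      ultimately show False by simp
    qed
    with eq A have "Y = Y'" by simp
    with XX p show "p = (X,Y)" by simp
  qed
qed

lemma transfer0:
  fixes m :: "complex poly"
  assumes m: "m \<noteq> 0"
    and eq: "\<And>R0 R1. P R0 R1 \<longleftrightarrow> (\<exists>X Y. R0 = m*X \<and> R1 = m*Y \<and> Q X Y)"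
    and ex: "\<exists>!(X,Y). Q X Y"
  shows "\<exists>!(R0,R1). P R0 R1"
proof -
  from ex obtain X Y where q: "Q X Y" by auto
  have u: "\<And>X' Y'. Q X' Y' \<Longrightarrow> X' = X \<and> Y' = Y" using ex q by blast
  show ?thesis
  proof (rule ex1I[of _ "(m*X, m*Y)"])
    show "case (m*X, m*Y) of (R0, R1) \<Rightarrow> P R0 R1" using eq q by auto
  next
    fix p assume "case p of (R0, R1) \<Rightarrow> P R0 R1"
    then obtain R0 R1 where p: "p = (R0,R1)" and "P R0 R1" by auto
    then obtain X' Y' where "R0 = m*X'" "R1 = m*Y'" "Q X' Y'" using eq by blast
    with u p show "p = (m*X, m*Y)" by auto
  qed
qed

lemma transfer1:
  fixes m :: "complex poly"
  assumes m: "m \<noteq> 0"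
    and eq: "\<And>R0 R1. P R0 R1 \<longleftrightarrow> (\<exists>X Y. R1 = m*X \<and> R0 = m*Y \<and> Q X Y)"
    and ex: "\<exists>!(X,Y). Q X Y"
  shows "\<exists>!(R0,R1). P R0 R1"
proof -
  from ex obtain X Y where q: "Q X Y" by auto
  have u: "\<And>X' Y'. Q X' Y' \<Longrightarrow> X' = X \<and> Y' = Y" using ex q by blast
  show ?thesis
  proof (rule ex1I[of _ "(m*Y, m*X)"])
    show "case (m*Y, m*X) of (R0, R1) \<Rightarrow> P R0 R1" using eq q by auto
  next
    fix p assume "case p of (R0, R1) \<Rightarrow> P R0 R1"
    then obtain R0 R1 where p: "p = (R0,R1)" and "P R0 R1" by auto
    then obtain X' Y' where "R1 = m*X'" "R0 = m*Y'" "Q X' Y'" using eq by blast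
    with u p show "p = (m*Y, m*X)" by auto
  qed
qed

lemma fdeg_nz: "p \<noteq> 0 \<Longrightarrow> fdeg p = ereal (real (degree p))"
  by (simp add: fdeg_def)

theorem corollary2p5:
  fixes F0 F1 :: "complex poly" and a :: complex and d dF M :: nat
  assumes "a \<noteq> 0"
    and "gcd F0 F1 = monom 1 dF"
    and "dF \<le> d"
    and "M \<le> d - dF"
  shows "(F0 \<noteq> 0 \<longrightarrow> (\<exists>!(R0, R1). degree_reducing F0 F1 a d M 0 R0 R1))
       \<and> (F1 \<noteq> 0 \<longrightarrow> (\<exists>!(R0', R1'). degree_reducing F0 F1 a d M 1 R0' R1'))
       \<and> (\<forall>R0 R1 R0' R1'. F0 \<noteq> 0 \<longrightarrow> F1 \<noteq> 0 \<longrightarrow>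
            degree_reducing F0 F1 a d M 0 R0 R1 \<longrightarrow>
            degree_reducing F0 F1 a d M 1 R0' R1' \<longrightarrow>
            ((R0, R1) = (R0', R1') \<longleftrightarrow>
               ereal (real d) < fdeg F0 + fdeg F1 - fdeg (gcd F0 F1) + ereal (real M)))"
proof -
  define g :: "complex poly" where "g = monom 1 dF"
  define m :: "complex poly" where "m = monom 1 M"
  define e where "e = d - dF - M"
  have de: "d = dF + M + e" unfolding e_def using assms(3,4) by simp
  have g0: "g \<noteq> 0" and m0: "m \<noteq> 0" unfolding g_def m_def by simp_all
  have gm0: "g*m \<noteq> 0" using g0 m0 by simp
  have gcdg: "gcd F0 F1 = g" using assms(2) g_def by simp
  have nz: "F0 \<noteq> 0 \<or> F1 \<noteq> 0" using gcdg g0 by auto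
  define G0 where "G0 = F0 div g"
  define G1 where "G1 = F1 div g"
  have F0: "F0 = g*G0" unfolding G0_def using gcdg by (metis dvd_mult_div_cancel gcd_dvd1)
  have F1: "F1 = g*G1" unfolding G1_def using gcdg by (metis dvd_mult_div_cancel gcd_dvd2)
  have cop: "coprime G0 G1" unfolding G0_def G1_def using div_gcd_coprime[OF nz] gcdg by simp
  have mon: "monom a d = (g*m) * monom a e" unfolding g_def m_def de by (simp add: mult_monom)
  have degg: "degree g = dF" unfolding g_def by (simp add: degree_monom_eq)
  have degm: "degree m = M" unfolding m_def by (simp add: degree_monom_eq)
  have fdg: "fdeg (gcd F0 F1) = ereal (real dF)" using gcdg g0 degg by (simp add: fdeg_def)
  have cc: "causal_complement F0 F1 a d (m*S0) (m*S1) \<longleftrightarrow> G0*S1 - G1*S0 = monom a e" for S0 S1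
  proof -
    have "F0*(m*S1) - F1*(m*S0) = (g*m)*(G0*S1 - G1*S0)" unfolding F0 F1 by (simp add: algebra_simps)
    thus ?thesis unfolding causal_complement_def mon using gm0 by simp
  qed
  have mult: "has_multiplicity M R0 R1 \<longleftrightarrow> (\<exists>X Y. R0 = m*X \<and> R1 = m*Y)" for R0 R1
    unfolding has_multiplicity_def m_def by (auto elim!: dvdE)
  have fdR: "fdeg (m*S) < ereal (real (degree G + M)) \<longleftrightarrow> (S = 0 \<or> degree S < degree G)" for S G
  proof (cases "S = 0")
    case True thus ?thesis by (simp add: fdeg_def)
  next
    case False
    hence "fdeg (m*S) = ereal (real (M + degree S))" using m0 degm by (simp add: fdeg_def degree_mult_eq)
    thus ?thesis using False by simp
  qed
  have thr0: "fdeg F0 - fdeg (gcd F0 F1) + ereal (real M) = ereal (real (degree G0 + M))" if "F0 \<noteq> 0"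
  proof -
    have "G0 \<noteq> 0" using that F0 by auto
    hence "fdeg F0 = ereal (real (dF + degree G0))" using that F0 g0 degg by (simp add: fdeg_def degree_mult_eq)
    thus ?thesis using fdg by simp
  qed
  have thr1: "fdeg F1 - fdeg (gcd F0 F1) + ereal (real M) = ereal (real (degree G1 + M))" if "F1 \<noteq> 0"
  proof -
    have "G1 \<noteq> 0" using that F1 by auto
    hence "fdeg F1 = ereal (real (dF + degree G1))" using that F1 g0 degg by (simp add: fdeg_def degree_mult_eq)
    thus ?thesis using fdg by simp
  qed
  define Q0 where "Q0 = (\<lambda>X Y. G0*Y - G1*X = monom a e \<and> (X = 0 \<or> degree X < degree G0))"
  define Q1 where "Q1 = (\<lambda>X Y. G1*Y - G0*X = - monom a e \<and> (X = 0 \<or> degree X < degree G1))"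
  have eq0: "degree_reducing F0 F1 a d M 0 R0 R1 \<longleftrightarrow> (\<exists>X Y. R0 = m*X \<and> R1 = m*Y \<and> Q0 X Y)"
    if "F0 \<noteq> 0" for R0 R1
  proof -
    have "degree_reducing F0 F1 a d M 0 R0 R1 \<longleftrightarrow> causal_complement F0 F1 a d R0 R1 \<and>
        has_multiplicity M R0 R1 \<and> fdeg R0 < ereal (real (degree G0 + M))"
      unfolding degree_reducing_def using thr0[OF that] by simp
    also have "\<dots> \<longleftrightarrow> (\<exists>X Y. R0 = m*X \<and> R1 = m*Y \<and> Q0 X Y)"
    proof
      assume h: "causal_complement F0 F1 a d R0 R1 \<and>
        has_multiplicity M R0 R1 \<and> fdeg R0 < ereal (real (degree G0 + M))"
      then obtain X Y where xy: "R0 = m*X" "R1 = m*Y" using mult by blast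
      have "Q0 X Y" unfolding Q0_def using h xy cc[of X Y] fdR[of X G0] by simp
      thus "\<exists>X Y. R0 = m*X \<and> R1 = m*Y \<and> Q0 X Y" using xy by blast
    next
      assume "\<exists>X Y. R0 = m*X \<and> R1 = m*Y \<and> Q0 X Y"
      then obtain X Y where xy: "R0 = m*X" "R1 = m*Y" "Q0 X Y" by blast
      show "causal_complement F0 F1 a d R0 R1 \<and>
        has_multiplicity M R0 R1 \<and> fdeg R0 < ereal (real (degree G0 + M))"
        using xy cc[of X Y] fdR[of X G0] mult unfolding Q0_def by blast
    qed
    finally show ?thesis .
  qed
  have eq1: "degree_reducing F0 F1 a d M 1 R0 R1 \<longleftrightarrow> (\<exists>X Y. R1 = m*X \<and> R0 = m*Y \<and> Q1 X Y)"
    if "F1 \<noteq> 0" for R0 R1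
  proof -
    have "G1*Y - G0*X = - monom a e \<longleftrightarrow> G0*X - G1*Y = monom a e" for X Y
      by (metis minus_diff_eq minus_equation_iff)
    note neg = this
    have "degree_reducing F0 F1 a d M 1 R0 R1 \<longleftrightarrow> causal_complement F0 F1 a d R0 R1 \<and>
        has_multiplicity M R0 R1 \<and> fdeg R1 < ereal (real (degree G1 + M))"
      unfolding degree_reducing_def using thr1[OF that] by simp
    also have "\<dots> \<longleftrightarrow> (\<exists>X Y. R1 = m*X \<and> R0 = m*Y \<and> Q1 X Y)"
    proof
      assume h: "causal_complement F0 F1 a d R0 R1 \<and>
        has_multiplicity M R0 R1 \<and> fdeg R1 < ereal (real (degree G1 + M))"
      then obtain X Y where xy: "R1 = m*X" "R0 = m*Y" using mult by blast
      have "Q1 X Y" unfolding Q1_def using h xy cc[of Y X] fdR[of X G1] neg[of Y X] by simp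
      thus "\<exists>X Y. R1 = m*X \<and> R0 = m*Y \<and> Q1 X Y" using xy by blast
    next
      assume "\<exists>X Y. R1 = m*X \<and> R0 = m*Y \<and> Q1 X Y"
      then obtain X Y where xy: "R1 = m*X" "R0 = m*Y" "Q1 X Y" by blast
      show "causal_complement F0 F1 a d R0 R1 \<and>
        has_multiplicity M R0 R1 \<and> fdeg R1 < ereal (real (degree G1 + M))"
        using xy cc[of Y X] fdR[of X G1] neg[of Y X] mult unfolding Q1_def by blast
    qed
    finally show ?thesis .
  qed
  have u0: "F0 \<noteq> 0 \<Longrightarrow> \<exists>!(X,Y). Q0 X Y"
    unfolding Q0_def by (rule core[OF cop]) (use F0 in auto)
  have u1: "F1 \<noteq> 0 \<Longrightarrow> \<exists>!(X,Y). Q1 X Y"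
    unfolding Q1_def by (rule core) (use cop F1 in \<open>auto simp: coprime_commute\<close>)
  have P1: "F0 \<noteq> 0 \<longrightarrow> (\<exists>!(R0, R1). degree_reducing F0 F1 a d M 0 R0 R1)"
    using transfer0[OF m0 eq0 u0] by blast
  have P2: "F1 \<noteq> 0 \<longrightarrow> (\<exists>!(R0', R1'). degree_reducing F0 F1 a d M 1 R0' R1')"
    using transfer1[OF m0 eq1 u1] by blast
  have P3: "(R0, R1) = (R0', R1') \<longleftrightarrow>
               ereal (real d) < fdeg F0 + fdeg F1 - fdeg (gcd F0 F1) + ereal (real M)"
    if f0: "F0 \<noteq> 0" and f1: "F1 \<noteq> 0" and r0: "degree_reducing F0 F1 a d M 0 R0 R1"
      and r1: "degree_reducing F0 F1 a d M 1 R0' R1'" for R0 R1 R0' R1'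
  proof -
    have G00: "G0 \<noteq> 0" using f0 F0 by auto
    have G10: "G1 \<noteq> 0" using f1 F1 by auto
    obtain S0 S1 where s: "R0 = m*S0" "R1 = m*S1" "Q0 S0 S1" using eq0[OF f0] r0 by blast
    obtain T1 T0 where t: "R1' = m*T1" "R0' = m*T0" "Q1 T1 T0" using eq1[OF f1] r1 by blast
    have thr: "fdeg F0 + fdeg F1 - fdeg (gcd F0 F1) + ereal (real M)
        = ereal (real (dF + degree G0 + degree G1 + M))"
    proof -
      have "fdeg F0 = ereal (real (dF + degree G0))" using f0 G00 F0 g0 degg by (simp add: fdeg_def degree_mult_eq)
      moreover have "fdeg F1 = ereal (real (dF + degree G1))" using f1 G10 F1 g0 degg by (simp add: fdeg_def degree_mult_eq)
      ultimately show ?thesis using fdg by simp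
    qed
    have iff: "ereal (real d) < fdeg F0 + fdeg F1 - fdeg (gcd F0 F1) + ereal (real M)
       \<longleftrightarrow> e < degree G0 + degree G1" unfolding thr de by (simp del: of_nat_add add: of_nat_add[symmetric])
    have S: "G0*S1 - G1*S0 = monom a e" "S0 = 0 \<or> degree S0 < degree G0" using s(3) unfolding Q0_def by auto
    have dmon: "degree (monom a e) = e" using assms(1) by (simp add: degree_monom_eq)
    have Q1uniq: "\<And>X Y X' Y'. Q1 X Y \<Longrightarrow> Q1 X' Y' \<Longrightarrow> X = X' \<and> Y = Y'"
      using u1[OF f1] by auto
    show ?thesis
    proof
      assume "(R0, R1) = (R0', R1')"
      hence "m*S0 = m*T0" "m*S1 = m*T1" using s t by auto
      hence e1: "S0 = T0" "S1 = T1" using m0 by auto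
      have S1d: "S1 = 0 \<or> degree S1 < degree G1" using t(3) e1 unfolding Q1_def by auto
      have "e < degree G0 + degree G1"
      proof -
        have ne: "G0*S1 - G1*S0 \<noteq> 0" using S(1) assms(1) by simp
        have "e \<le> max (degree (G0*S1)) (degree (G1*S0))"
          using degree_diff_le_max[of "G0*S1" "G1*S0"] S(1) dmon by simp
        moreover have "degree (G0*S1) < degree G0 + degree G1 \<or> G0*S1 = 0"
          using S1d degree_mult_le[of G0 S1] by auto
        moreover have "degree (G1*S0) < degree G0 + degree G1 \<or> G1*S0 = 0"
          using S(2) degree_mult_le[of G1 S0] by auto
        moreover have "\<not> (G0*S1 = 0 \<and> G1*S0 = 0)" using ne by auto
        ultimately show ?thesis by (cases "G0*S1 = 0"; cases "G1*S0 = 0"; auto)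
      qed
      thus "ereal (real d) < fdeg F0 + fdeg F1 - fdeg (gcd F0 F1) + ereal (real M)" using iff by simp
    next
      assume "ereal (real d) < fdeg F0 + fdeg F1 - fdeg (gcd F0 F1) + ereal (real M)"
      hence lt: "e < degree G0 + degree G1" using iff by simp
      have S1d: "S1 = 0 \<or> degree S1 < degree G1"
      proof (cases "S1 = 0")
        case True thus ?thesis by simp
      next
        case False
        hence S10: "S1 \<noteq> 0" .
        have eqq: "G0*S1 = monom a e + G1*S0" using S(1) by (simp add: algebra_simps)
        have "degree (G0*S1) = degree G0 + degree S1" using S10 G00 by (simp add: degree_mult_eq)
        moreover have "degree (monom a e + G1*S0) \<le> max e (degree (G1*S0))"
          using degree_add_le_max[of "monom a e" "G1*S0"] dmon by simp
        moreover have "degree (G1*S0) < degree G0 + degree G1 \<or> G1*S0 = 0"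
          using S(2) degree_mult_le[of G1 S0] by auto
        ultimately have "degree S1 < degree G1" using lt eqq by (cases "G1*S0 = 0") auto
        thus ?thesis by simp
      qed
      have "Q1 S1 S0" unfolding Q1_def using S S1d by (auto simp: algebra_simps)
      hence "S1 = T1 \<and> S0 = T0" using Q1uniq t(3) by blast
      thus "(R0, R1) = (R0', R1')" using s t by simp
    qed
  qed
  show ?thesis using P1 P2 P3 by blast
qed

end
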